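(* Let $S\subseteq\{1,\dots,p\}$ with $|S|=k$, $\delta\in(0,1]$, $R>0$, $\lambda>0$, $\alpha_1\ge\mu$, $\tau_1>0$. Let $\hat\theta,\tilde\theta\in\mathbb{R}^{p\times q}$ with $\|\hat\theta\|_{1,2}\le R$, $\|\tilde\theta\|_{1,2}\le R$, where all rows of $\hat\theta$ outside $S$ are zero, and put $\tilde\nu=\tilde\theta-\hat\theta$. Suppose there are $\hat z\in\partial\|\hat\theta\|_{1,2}$ and $\tilde z\in\partial\|\tilde\theta\|_{1,2}$ such that $\nabla\bar{\mathcal L}_n(\hat\theta)+\lambda\hat z=0$, $\langle\nabla\bar{\mathcal L}_n(\tilde\theta)+\lambda\tilde z,\hat\theta-\tilde\theta\rangle\ge0$, and $\|\hat z_{S^c}\|_{\infty,2}\le1-\delta$. Suppose also $$\langle\nabla\bar{\mathcal L}_n(\tilde\theta)-\nabla\bar{\mathcal L}_n(\hat\theta),\tilde\nu\rangle\ge(\alpha_1-\mu)\|\tilde\nu\|_F^2-\tau_1\frac{\log p}{n}\|\tilde\nu\|_{1,2}^2$$ and $\lambda\ge\frac{4R\tau_1q\log p}{\delta n}$. Then $$\|\tilde\nu\|_{1,2}\le\Big(\frac4\delta+2\Big)\sqrt k\,\|\tilde\nu\|_F.$$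
   Context: Notation: for $A\in\mathbb{R}^{p\times q}$, $A_{i:}$ row $i$; $A_S$, $A_{S^c}$ the submatrices of rows in $S$, resp. not in $S$; $\|A\|_{a,b}=(\sum_i\|A_{i:}\|_b^a)^{1/a}$ ($a=\infty$: max over $i$); $\|A\|_F$ Frobenius norm; $\langle A,B\rangle=\mathrm{tr}(A^TB)$. $\bar{\mathcal L}_n:\mathbb{R}^{p\times q}\to\mathbb{R}$ is a differentiable function (in the paper, $\bar{\mathcal L}_n(\theta)=\mathcal L_n(\theta)-\sum_i q_\lambda(\|\theta_{i:}\|_2)$ with $\mathcal L_n$ the multi-treatment least-squares loss and $q_\lambda(t)=\lambda|t|-\rho_\lambda(t)$). Subdifferential: $z\in\partial\|\theta\|_{1,2}$ iff $z_{i:}=\theta_{i:}/\|\theta_{i:}\|_2$ when $\theta_{i:}\ne0$ and $\|z_{i:}\|_2\le1$ when $\theta_{i:}=0$. *)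

theory Defs
  imports "HOL-Analysis.Analysis"
begin

text \<open>Matrices in R^{p x q} are rendered as real^'q^'p (rows indexed by 'p,
  p = CARD('p), q = CARD('q)).
  The Frobenius norm is the library norm on real^'q^'p and the trace inner product is
  the library inner product.\<close>

definition norm12 :: "real^'q^'p \<Rightarrow> real" where
  "norm12 A = (\<Sum>i\<in>UNIV. norm (A $ i))"

definition subdiff12 :: "real^'q^'p \<Rightarrow> (real^'q^'p) set" where
  "subdiff12 \<theta> = {z. \<forall>i. (\<theta> $ i \<noteq> 0 \<longrightarrow> z $ i = (1 / norm (\<theta> $ i)) *\<^sub>R (\<theta> $ i))
                        \<and> (\<theta> $ i = 0 \<longrightarrow> norm (z $ i) \<le> 1)}"

end

theory Submission
  imports Defs
begin

lemma subdiff_row: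
  fixes \<theta> z :: "real^'q^'p"
  assumes "z \<in> subdiff12 \<theta>"
  shows "inner (z $ i) (\<theta> $ i) = norm (\<theta> $ i)" "norm (z $ i) \<le> 1"
proof -
  have h: "(\<theta> $ i \<noteq> 0 \<longrightarrow> z $ i = (1 / norm (\<theta> $ i)) *\<^sub>R (\<theta> $ i))
                        \<and> (\<theta> $ i = 0 \<longrightarrow> norm (z $ i) \<le> 1)"
    using assms unfolding subdiff12_def by blast
  show "inner (z $ i) (\<theta> $ i) = norm (\<theta> $ i)"
    using h by (cases "\<theta> $ i = 0") (auto simp: power2_norm_eq_inner[symmetric] power2_eq_square)
  show "norm (z $ i) \<le> 1"
    using h by (cases "\<theta> $ i = 0") auto
qed

lemma inner_le_row:
  fixes a b :: "real^'q"
  assumes "norm a \<le> c"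
  shows "inner a b \<le> c * norm b"
proof -
  have "inner a b \<le> norm a * norm b" by (rule norm_cauchy_schwarz)
  also have "\<dots> \<le> c * norm b" using assms by (simp add: mult_right_mono)
  finally show ?thesis .
qed

lemma row_ineq:
  fixes \<theta>h \<theta>t zh zt :: "real^'q^'p"
  assumes zh: "zh \<in> subdiff12 \<theta>h" and zt: "zt \<in> subdiff12 \<theta>t"
    and supp: "\<And>i. i \<notin> S \<Longrightarrow> \<theta>h $ i = 0"
    and dual: "\<And>i. i \<notin> S \<Longrightarrow> norm (zh $ i) \<le> 1 - \<delta>"
  shows "inner (zh $ i - zt $ i) (\<theta>t $ i - \<theta>h $ i)
          \<le> (if i \<in> S then 0 else - \<delta> * norm (\<theta>t $ i - \<theta>h $ i))"
proof (cases "i \<in> S")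
  case True
  have a: "inner (zh $ i) (\<theta>h $ i) = norm (\<theta>h $ i)" "norm (zh $ i) \<le> 1"
    using subdiff_row[OF zh] by auto
  have b: "inner (zt $ i) (\<theta>t $ i) = norm (\<theta>t $ i)" "norm (zt $ i) \<le> 1"
    using subdiff_row[OF zt] by auto
  have c: "inner (zh $ i) (\<theta>t $ i) \<le> norm (\<theta>t $ i)"
    using inner_le_row[OF a(2)] by simp
  have d: "inner (zt $ i) (\<theta>h $ i) \<le> norm (\<theta>h $ i)"
    using inner_le_row[OF b(2)] by simp
  have "inner (zh $ i - zt $ i) (\<theta>t $ i - \<theta>h $ i) =
     inner (zh $ i) (\<theta>t $ i) - inner (zh $ i) (\<theta>h $ i) - inner (zt $ i) (\<theta>t $ i) + inner (zt $ i) (\<theta>h $ i)"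
    by (simp add: inner_diff_left inner_diff_right)
  then show ?thesis using True a b c d by simp
next
  case False
  have b: "inner (zt $ i) (\<theta>t $ i) = norm (\<theta>t $ i)"
    using subdiff_row[OF zt] by auto
  have c: "inner (zh $ i) (\<theta>t $ i) \<le> (1 - \<delta>) * norm (\<theta>t $ i)"
    using inner_le_row[OF dual[OF False]] by simp
  show ?thesis using False supp[OF False] b c
    by (simp add: inner_diff_left algebra_simps)
qed

lemma cs_sum:
  fixes \<nu> :: "real^'q^'p"
  shows "(\<Sum>i\<in>S. norm (\<nu> $ i)) \<le> sqrt (real (card S)) * norm \<nu>"
proof -
  have "(\<Sum>i\<in>S. norm (\<nu> $ i)) = (\<Sum>i\<in>S. \<bar>norm (\<nu> $ i)\<bar> * \<bar>(1::real)\<bar>)" by simp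
  also have "\<dots> \<le> L2_set (\<lambda>i. norm (\<nu> $ i)) S * L2_set (\<lambda>i. 1::real) S"
    by (rule L2_set_mult_ineq)
  also have "L2_set (\<lambda>i. 1::real) S = sqrt (real (card S))"
    by (simp add: L2_set_constant)
  also have "L2_set (\<lambda>i. norm (\<nu> $ i)) S \<le> norm \<nu>"
    unfolding norm_vec_def L2_set_def
    by (rule real_sqrt_le_mono, rule sum_mono2) auto
  finally show ?thesis by (simp add: mult_right_mono mult.commute)
qed

theorem lemma10:
  fixes L :: "real^'q^'p \<Rightarrow> real"
    and G :: "real^'q^'p \<Rightarrow> real^'q^'p"
    and S :: "'p set"
    and \<theta>h \<theta>t zh zt :: "real^'q^'p"
    and \<delta> R lam \<alpha>1 \<mu> \<tau>1 :: real
    and n :: nat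
  assumes grad: "\<And>\<theta>. (L has_derivative (\<lambda>h. G \<theta> \<bullet> h)) (at \<theta>)"
    and n_pos: "n > 0"
    and \<delta>: "0 < \<delta>" "\<delta> \<le> 1"
    and R: "R > 0" and lam_pos: "lam > 0" and alpha: "\<alpha>1 \<ge> \<mu>" and tau: "\<tau>1 > 0"
    and bh: "norm12 \<theta>h \<le> R" and bt: "norm12 \<theta>t \<le> R"
    and supp: "\<And>i. i \<notin> S \<Longrightarrow> \<theta>h $ i = 0"
    and zh: "zh \<in> subdiff12 \<theta>h" and zt: "zt \<in> subdiff12 \<theta>t"
    and stat_h: "G \<theta>h + lam *\<^sub>R zh = 0"
    and stat_t: "(G \<theta>t + lam *\<^sub>R zt) \<bullet> (\<theta>h - \<theta>t) \<ge> 0"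
    and dual: "\<And>i. i \<notin> S \<Longrightarrow> norm (zh $ i) \<le> 1 - \<delta>"
    and rsc: "(G \<theta>t - G \<theta>h) \<bullet> (\<theta>t - \<theta>h) \<ge>
               (\<alpha>1 - \<mu>) * (norm (\<theta>t - \<theta>h))\<^sup>2
               - \<tau>1 * (ln (real CARD('p)) / real n) * (norm12 (\<theta>t - \<theta>h))\<^sup>2"
    and lam_lb: "lam \<ge> 4 * R * \<tau>1 * real CARD('q) * ln (real CARD('p)) / (\<delta> * real n)"
  shows "norm12 (\<theta>t - \<theta>h) \<le> (4 / \<delta> + 2) * sqrt (real (card S)) * norm (\<theta>t - \<theta>h)"
proof -
  define \<nu> where "\<nu> = \<theta>t - \<theta>h"
  define a where "a = (\<Sum>i\<in>S. norm (\<nu> $ i))"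
  define b where "b = (\<Sum>i\<in>-S. norm (\<nu> $ i))"
  define c where "c = \<tau>1 * (ln (real CARD('p)) / real n)"
  define N where "N = norm12 \<nu>"
  have Nab: "N = a + b"
    unfolding N_def a_def b_def norm12_def
    using sum.subset_diff[of S UNIV "\<lambda>i. norm (\<nu> $ i)"] by (simp add: Compl_eq_Diff_UNIV)
  have a0: "a \<ge> 0" "b \<ge> 0" unfolding a_def b_def by (auto intro: sum_nonneg)
  have c0: "c \<ge> 0" unfolding c_def using tau n_pos by (auto intro!: mult_nonneg_nonneg divide_nonneg_nonneg)
  have rowsum: "inner (zh - zt) \<nu> \<le> - \<delta> * b"
  proof -
    have "inner (zh - zt) \<nu> = (\<Sum>i\<in>UNIV. inner (zh $ i - zt $ i) (\<theta>t $ i - \<theta>h $ i))"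
      unfolding inner_vec_def \<nu>_def by simp
    also have "\<dots> \<le> (\<Sum>i\<in>UNIV. (if i \<in> S then 0 else - \<delta> * norm (\<theta>t $ i - \<theta>h $ i)))"
      by (rule sum_mono, rule row_ineq[OF zh zt supp dual])
    also have "\<dots> = - \<delta> * b"
      unfolding b_def \<nu>_def by (simp add: sum.If_cases sum_distrib_left Compl_eq_Diff_UNIV)
    finally show ?thesis .
  qed
  have Gineq: "(G \<theta>t - G \<theta>h) \<bullet> \<nu> \<le> lam * inner (zh - zt) \<nu>"
  proof -
    have Gh: "G \<theta>h = - (lam *\<^sub>R zh)" using stat_h by (simp add: eq_neg_iff_add_eq_0)
    have "0 \<le> (G \<theta>t + lam *\<^sub>R zt) \<bullet> (- \<nu>)" using stat_t unfolding \<nu>_def by simp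
    then have "G \<theta>t \<bullet> \<nu> \<le> - lam * (zt \<bullet> \<nu>)" by (simp add: inner_add_left)
    then show ?thesis using Gh by (simp add: inner_diff_left algebra_simps)
  qed
  have key: "lam * \<delta> * b \<le> c * N\<^sup>2"
  proof -
    have "(\<alpha>1 - \<mu>) * (norm \<nu>)\<^sup>2 \<ge> 0" using alpha by simp
    moreover have "(\<alpha>1 - \<mu>) * (norm \<nu>)\<^sup>2 - c * N\<^sup>2 \<le> lam * inner (zh - zt) \<nu>"
      using rsc Gineq unfolding \<nu>_def c_def N_def by linarith
    moreover have "lam * inner (zh - zt) \<nu> \<le> lam * (- \<delta> * b)"
      using mult_left_mono[OF rowsum, of lam] lam_pos by simp
    ultimately show ?thesis by simp
  qed
  have NR: "N \<le> 2 * R"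
  proof -
    have "N \<le> norm12 \<theta>t + norm12 \<theta>h"
      unfolding N_def norm12_def \<nu>_def sum.distrib[symmetric]
      by (rule sum_mono) (simp add: norm_triangle_ineq4)
    then show ?thesis using bh bt by simp
  qed
  have N0: "N \<ge> 0" using Nab a0 by simp
  have q1: "real CARD('q) \<ge> 1" by simp
  have lamc: "lam * \<delta> \<ge> 4 * R * c"
  proof -
    have "4 * R * \<tau>1 * real CARD('q) * ln (real CARD('p)) / (\<delta> * real n) * \<delta>
          = 4 * R * real CARD('q) * c"
      unfolding c_def using \<delta> n_pos by (simp add: field_simps)
    moreover have "4 * R * real CARD('q) * c \<ge> 4 * R * c"
      using q1 R c0 by (simp add: mult_right_mono mult_left_mono)
    moreover have "lam * \<delta> \<ge> 4 * R * \<tau>1 * real CARD('q) * ln (real CARD('p)) / (\<delta> * real n) * \<delta>"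
      using mult_right_mono[OF lam_lb, of \<delta>] \<delta> by linarith
    ultimately show ?thesis by linarith
  qed
  have "c * N\<^sup>2 \<le> c * (2 * R) * N"
    proof -
    have "N * N \<le> (2 * R) * N" by (rule mult_right_mono[OF NR N0])
    then have "c * (N * N) \<le> c * ((2 * R) * N)" using c0 by (rule mult_left_mono)
    then show ?thesis by (simp add: power2_eq_square mult.assoc)
  qed
  also have "\<dots> \<le> (lam * \<delta> / 2) * N"
    using lamc N0 by (intro mult_right_mono) (auto simp: algebra_simps)
  finally have "lam * \<delta> * b \<le> lam * \<delta> * (N / 2)" using key by simp
  then have "b \<le> N / 2" using lam_pos \<delta> by (simp add: mult_le_cancel_left_pos)
  then have "N \<le> 2 * a" using Nab by simp
  also have "\<dots> \<le> 2 * (sqrt (real (card S)) * norm \<nu>)"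
    unfolding a_def using cs_sum by simp
  also have "\<dots> \<le> (4 / \<delta> + 2) * sqrt (real (card S)) * norm \<nu>"
  proof -
    have "2 \<le> 4 / \<delta> + 2" using \<delta> by simp
    then have "2 * (sqrt (real (card S)) * norm \<nu>) \<le> (4 / \<delta> + 2) * (sqrt (real (card S)) * norm \<nu>)"
      by (rule mult_right_mono) simp
    then show ?thesis by (simp add: mult.assoc)
  qed
  finally show ?thesis unfolding N_def \<nu>_def .
qed

end
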